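(* Let $M$ be a procedure that may contain ghost code and let $\hat M$ be its projection with all ghost code eliminated. Let $c_1$ be a configuration that does not interpret ghost variables/fields. If $\hat M$ started from $c_1$ reaches some configuration $c_2$, then $M$ started from any configuration $C_1$ extending $c_1$ either reaches $\bot$ or reaches some configuration $C_2$ that extends $c_2$.
   Context: Programs are in an imperative while-language with (recursive) methods: assignments, field lookup, field mutation, allocation, method calls, $\mathsf{skip}$, $\mathsf{assume}$, $\mathsf{return}$, sequencing, if-then-else, while. A configuration consists of a store, a finite set of allocated objects and an interpretation of fields; there is an error configuration $\bot$. The program may be augmented with ghost code over distinguished ghost variables and ghost fields, following the grammar: user statements (assignments over user variables/fields, lookup, mutation of user fields, allocation, calls whose arguments/results may include ghost parameters, $\mathsf{skip}$, $\mathsf{assume}$ on user conditions, $\mathsf{return}$, sequencing, if and while on user conditions), plus "pure ghost" programs, generated by: assignments to ghost variables of expressions over user and ghost state, reading fields into ghost variables, writing ghost variables into ghost fields, calls to always-terminating ghost functions over ghost variables, $\mathsf{skip}$, sequencing, if-then-else and while with conditions over user and ghost state and purely ghost bodies, where ghost loops always terminate. The projection $\hat M$ replaces every pure ghost subprogram with $\mathsf{skip}$ and removes ghost parameters from signatures and calls. For a configuration $C$ interpreting ghost state, $\hat C$ is its restriction to user variables/fields ($\hat\bot=\bot$), and $C$ extends $c$ if $\hat C=c$. For simplicity the program consists of the single procedure $M$. *)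

theory Defs
  imports Main
begin

type_synonym var = string
type_synonym fld = string
type_synonym loc = nat

datatype val = IntV int | BoolV bool | RefV loc | NullV

text \<open>Expressions: constants, variables, and applications of arbitrary (total HOL, hence
  always terminating, possibly failing) functions.  Ghost function calls over ghost
  variables are expressions of the form EOp f (map EVar xs).\<close>
datatype expr = EConst val | EVar var | EOp "val list \<Rightarrow> val option" "expr list"

datatype stmt =
    SSkip
  | SAssign var expr
  | SLookup var var fld           (* x := y.f *)
  | SMutate var fld var           (* y.f := z *)
  | SAlloc var
  | SCall "var list" "var list"   (* rs := M(args) *)
  | SAssume expr
  | SReturn
  | SSeq stmt stmt
  | SIf expr stmt stmt
  | SWhile expr stmt

record proc =
  params  :: "var list"
  results :: "var list"
  body    :: stmt

record conf =
  store  :: "var \<Rightarrow> val option"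
  allocd :: "loc set"
  heap   :: "loc \<times> fld \<Rightarrow> val option"

datatype outcome = Norm conf | Ret conf | Bot

fun evars :: "expr \<Rightarrow> var set" where
  "evars (EConst v) = {}"
| "evars (EVar x) = {x}"
| "evars (EOp f es) = \<Union> (set (map evars es))"

fun eval :: "(var \<Rightarrow> val option) \<Rightarrow> expr \<Rightarrow> val option" where
  "eval s (EConst v) = Some v"
| "eval s (EVar x) = s x"
| "eval s (EOp f es) = (case those (map (eval s) es) of None \<Rightarrow> None | Some vs \<Rightarrow> f vs)"

section \<open>Big-step semantics (single procedure P); Bot is the error configuration\<close>

inductive exec :: "proc \<Rightarrow> stmt \<Rightarrow> conf \<Rightarrow> outcome \<Rightarrow> bool" for P where
  Skip: "exec P SSkip \<sigma> (Norm \<sigma>)"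
| Assign: "eval (store \<sigma>) e = Some v \<Longrightarrow>
     exec P (SAssign x e) \<sigma> (Norm (\<sigma>\<lparr>store := (store \<sigma>)(x \<mapsto> v)\<rparr>))"
| AssignErr: "eval (store \<sigma>) e = None \<Longrightarrow> exec P (SAssign x e) \<sigma> Bot"
| Lookup: "\<lbrakk> store \<sigma> y = Some (RefV l); l \<in> allocd \<sigma>; heap \<sigma> (l, f) = Some v \<rbrakk> \<Longrightarrow>
     exec P (SLookup x y f) \<sigma> (Norm (\<sigma>\<lparr>store := (store \<sigma>)(x \<mapsto> v)\<rparr>))"
| LookupErr: "\<not> (\<exists>l v. store \<sigma> y = Some (RefV l) \<and> l \<in> allocd \<sigma> \<and> heap \<sigma> (l, f) = Some v) \<Longrightarrow>
     exec P (SLookup x y f) \<sigma> Bot"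
| Mutate: "\<lbrakk> store \<sigma> y = Some (RefV l); l \<in> allocd \<sigma>; store \<sigma> z = Some v \<rbrakk> \<Longrightarrow>
     exec P (SMutate y f z) \<sigma> (Norm (\<sigma>\<lparr>heap := (heap \<sigma>)((l, f) \<mapsto> v)\<rparr>))"
| MutateErr: "\<not> (\<exists>l v. store \<sigma> y = Some (RefV l) \<and> l \<in> allocd \<sigma> \<and> store \<sigma> z = Some v) \<Longrightarrow>
     exec P (SMutate y f z) \<sigma> Bot"
| Alloc: "l \<notin> allocd \<sigma> \<Longrightarrow>
     exec P (SAlloc x) \<sigma> (Norm (\<sigma>\<lparr>store := (store \<sigma>)(x \<mapsto> RefV l), allocd := insert l (allocd \<sigma>)\<rparr>))"
| Call: "\<lbrakk> map (store \<sigma>) as = map Some vs; length as = length (params P);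
           exec P (body P) (\<sigma>\<lparr>store := Map.empty(params P [\<mapsto>] vs)\<rparr>) out;
           out = Norm \<sigma>1 \<or> out = Ret \<sigma>1;
           map (store \<sigma>1) (results P) = map Some ws; length rs = length (results P) \<rbrakk> \<Longrightarrow>
     exec P (SCall rs as) \<sigma>
       (Norm (\<sigma>\<lparr>store := (store \<sigma>)(rs [\<mapsto>] ws), allocd := allocd \<sigma>1, heap := heap \<sigma>1\<rparr>))"
| CallArgErr: "\<not> (\<exists>vs. map (store \<sigma>) as = map Some vs \<and> length as = length (params P)) \<Longrightarrow>
     exec P (SCall rs as) \<sigma> Bot"
| CallBodyErr: "\<lbrakk> map (store \<sigma>) as = map Some vs; length as = length (params P);
           exec P (body P) (\<sigma>\<lparr>store := Map.empty(params P [\<mapsto>] vs)\<rparr>) Bot \<rbrakk> \<Longrightarrow>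
     exec P (SCall rs as) \<sigma> Bot"
| CallResErr: "\<lbrakk> map (store \<sigma>) as = map Some vs; length as = length (params P);
           exec P (body P) (\<sigma>\<lparr>store := Map.empty(params P [\<mapsto>] vs)\<rparr>) out;
           out = Norm \<sigma>1 \<or> out = Ret \<sigma>1;
           \<not> (\<exists>ws. map (store \<sigma>1) (results P) = map Some ws) \<or> length rs \<noteq> length (results P) \<rbrakk> \<Longrightarrow>
     exec P (SCall rs as) \<sigma> Bot"
| AssumeT: "eval (store \<sigma>) e = Some (BoolV True) \<Longrightarrow> exec P (SAssume e) \<sigma> (Norm \<sigma>)"
| AssumeErr: "\<not> (\<exists>b. eval (store \<sigma>) e = Some (BoolV b)) \<Longrightarrow> exec P (SAssume e) \<sigma> Bot"
| Return: "exec P SReturn \<sigma> (Ret \<sigma>)"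
| Seq: "\<lbrakk> exec P a \<sigma> (Norm \<sigma>'); exec P b \<sigma>' out \<rbrakk> \<Longrightarrow> exec P (SSeq a b) \<sigma> out"
| SeqAbrupt: "\<lbrakk> exec P a \<sigma> out; \<forall>\<sigma>'. out \<noteq> Norm \<sigma>' \<rbrakk> \<Longrightarrow> exec P (SSeq a b) \<sigma> out"
| IfT: "\<lbrakk> eval (store \<sigma>) e = Some (BoolV True); exec P a \<sigma> out \<rbrakk> \<Longrightarrow> exec P (SIf e a b) \<sigma> out"
| IfF: "\<lbrakk> eval (store \<sigma>) e = Some (BoolV False); exec P b \<sigma> out \<rbrakk> \<Longrightarrow> exec P (SIf e a b) \<sigma> out"
| IfErr: "\<not> (\<exists>b. eval (store \<sigma>) e = Some (BoolV b)) \<Longrightarrow> exec P (SIf e a b) \<sigma> Bot"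
| WhileT: "\<lbrakk> eval (store \<sigma>) e = Some (BoolV True); exec P s \<sigma> (Norm \<sigma>');
             exec P (SWhile e s) \<sigma>' out \<rbrakk> \<Longrightarrow> exec P (SWhile e s) \<sigma> out"
| WhileAbrupt: "\<lbrakk> eval (store \<sigma>) e = Some (BoolV True); exec P s \<sigma> out; \<forall>\<sigma>'. out \<noteq> Norm \<sigma>' \<rbrakk> \<Longrightarrow>
     exec P (SWhile e s) \<sigma> out"
| WhileF: "eval (store \<sigma>) e = Some (BoolV False) \<Longrightarrow> exec P (SWhile e s) \<sigma> (Norm \<sigma>)"
| WhileErr: "\<not> (\<exists>b. eval (store \<sigma>) e = Some (BoolV b)) \<Longrightarrow> exec P (SWhile e s) \<sigma> Bot"

text \<open>Running the procedure from a configuration: result None is the error configuration Bot.\<close>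
definition run :: "proc \<Rightarrow> conf \<Rightarrow> conf option \<Rightarrow> bool" where
  "run P \<sigma> r \<longleftrightarrow>
     (case r of None \<Rightarrow> exec P (body P) \<sigma> Bot
              | Some \<sigma>' \<Rightarrow> exec P (body P) \<sigma> (Norm \<sigma>') \<or> exec P (body P) \<sigma> (Ret \<sigma>'))"

section \<open>Ghost code (GV = ghost variables, GF = ghost fields)\<close>

fun pure_ghost :: "var set \<Rightarrow> fld set \<Rightarrow> stmt \<Rightarrow> bool" where
  "pure_ghost GV GF (SAssign x e) = (x \<in> GV)"
| "pure_ghost GV GF (SLookup x y f) = (x \<in> GV)"
| "pure_ghost GV GF (SMutate y f z) = (f \<in> GF \<and> z \<in> GV)"
| "pure_ghost GV GF SSkip = True"
| "pure_ghost GV GF (SSeq a b) = (pure_ghost GV GF a \<and> pure_ghost GV GF b)"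
| "pure_ghost GV GF (SIf e a b) = (pure_ghost GV GF a \<and> pure_ghost GV GF b)"
| "pure_ghost GV GF (SWhile e s) = pure_ghost GV GF s"
| "pure_ghost GV GF _ = False"

text \<open>Augmented (user) statements; ps/rs are the formal parameters/results of the procedure.\<close>
fun aug :: "var set \<Rightarrow> fld set \<Rightarrow> var list \<Rightarrow> var list \<Rightarrow> stmt \<Rightarrow> bool" where
  "aug GV GF ps rs (SAssign x e) = (pure_ghost GV GF (SAssign x e) \<or> (x \<notin> GV \<and> evars e \<inter> GV = {}))"
| "aug GV GF ps rs (SLookup x y f) =
     (pure_ghost GV GF (SLookup x y f) \<or> (x \<notin> GV \<and> y \<notin> GV \<and> f \<notin> GF))"
| "aug GV GF ps rs (SMutate y f z) =
     (pure_ghost GV GF (SMutate y f z) \<or> (y \<notin> GV \<and> z \<notin> GV \<and> f \<notin> GF))"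
| "aug GV GF ps rs (SAlloc x) = (x \<notin> GV)"
| "aug GV GF ps rs (SCall r a) =
     (length r = length rs \<and> length a = length ps \<and>
      (\<forall>i<length a. ps ! i \<notin> GV \<longrightarrow> a ! i \<notin> GV) \<and>
      (\<forall>i<length r. rs ! i \<in> GV \<longleftrightarrow> r ! i \<in> GV))"
| "aug GV GF ps rs SSkip = True"
| "aug GV GF ps rs (SAssume e) = (evars e \<inter> GV = {})"
| "aug GV GF ps rs SReturn = True"
| "aug GV GF ps rs (SSeq a b) =
     (pure_ghost GV GF (SSeq a b) \<or> (aug GV GF ps rs a \<and> aug GV GF ps rs b))"
| "aug GV GF ps rs (SIf e a b) =
     (pure_ghost GV GF (SIf e a b) \<or> (evars e \<inter> GV = {} \<and> aug GV GF ps rs a \<and> aug GV GF ps rs b))"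
| "aug GV GF ps rs (SWhile e s) =
     (pure_ghost GV GF (SWhile e s) \<or> (evars e \<inter> GV = {} \<and> aug GV GF ps rs s))"

definition wf_proc :: "var set \<Rightarrow> fld set \<Rightarrow> proc \<Rightarrow> bool" where
  "wf_proc GV GF P \<longleftrightarrow> aug GV GF (params P) (results P) (body P)"

fun substmts :: "stmt \<Rightarrow> stmt set" where
  "substmts (SSeq a b) = insert (SSeq a b) (substmts a \<union> substmts b)"
| "substmts (SIf e a b) = insert (SIf e a b) (substmts a \<union> substmts b)"
| "substmts (SWhile e s) = insert (SWhile e s) (substmts s)"
| "substmts s = {s}"

definition ghost_loops_terminate :: "var set \<Rightarrow> fld set \<Rightarrow> proc \<Rightarrow> bool" where
  "ghost_loops_terminate GV GF P \<longleftrightarrow>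
     (\<forall>e s. SWhile e s \<in> substmts (body P) \<and> pure_ghost GV GF (SWhile e s) \<longrightarrow>
        (\<forall>\<sigma>. \<exists>out. exec P (SWhile e s) \<sigma> out))"

definition proj_list :: "var set \<Rightarrow> var list \<Rightarrow> 'a list \<Rightarrow> 'a list" where
  "proj_list GV fs as = map snd (filter (\<lambda>(p, a). p \<notin> GV) (zip fs as))"

fun proj_stmt :: "var set \<Rightarrow> fld set \<Rightarrow> var list \<Rightarrow> var list \<Rightarrow> stmt \<Rightarrow> stmt" where
  "proj_stmt GV GF ps rs s =
    (if pure_ghost GV GF s then SSkip else
     (case s of
        SSeq a b \<Rightarrow> SSeq (proj_stmt GV GF ps rs a) (proj_stmt GV GF ps rs b)
      | SIf e a b \<Rightarrow> SIf e (proj_stmt GV GF ps rs a) (proj_stmt GV GF ps rs b)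
      | SWhile e b \<Rightarrow> SWhile e (proj_stmt GV GF ps rs b)
      | SCall r a \<Rightarrow> SCall (proj_list GV rs r) (proj_list GV ps a)
      | _ \<Rightarrow> s))"

definition proj :: "var set \<Rightarrow> fld set \<Rightarrow> proc \<Rightarrow> proc" where
  "proj GV GF P =
     \<lparr> params = filter (\<lambda>p. p \<notin> GV) (params P),
       results = filter (\<lambda>p. p \<notin> GV) (results P),
       body = proj_stmt GV GF (params P) (results P) (body P) \<rparr>"

definition restrict :: "var set \<Rightarrow> fld set \<Rightarrow> conf \<Rightarrow> conf" where
  "restrict GV GF C =
     \<lparr> store = store C |` (- GV), allocd = allocd C, heap = heap C |` {p. snd p \<notin> GF} \<rparr>"

definition extends :: "var set \<Rightarrow> fld set \<Rightarrow> conf \<Rightarrow> conf \<Rightarrow> bool" where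
  "extends GV GF C c \<longleftrightarrow> restrict GV GF C = c"

definition user_conf :: "var set \<Rightarrow> fld set \<Rightarrow> conf \<Rightarrow> bool" where
  "user_conf GV GF c \<longleftrightarrow> dom (store c) \<inter> GV = {} \<and> (\<forall>p \<in> dom (heap c). snd p \<notin> GF)
                           \<and> finite (allocd c)"

end

theory Submission imports Defs begin

declare proj_stmt.simps[simp del]

lemma substmts_self: "s \<in> substmts s" by (cases s) auto
lemma substmts_trans: "s \<in> substmts t \<Longrightarrow> substmts s \<subseteq> substmts t"
  by (induction t) auto

lemma ghost_pres:
  "exec P s \<sigma> out \<Longrightarrow> pure_ghost GV GF s \<Longrightarrow>
   out = Bot \<or> (\<exists>\<sigma>'. out = Norm \<sigma>' \<and> restrict GV GF \<sigma>' = restrict GV GF \<sigma>)"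
  by (induction rule: exec.induct) (auto simp: restrict_def)

lemma ghost_term:
  assumes glt: "ghost_loops_terminate GV GF P"
  shows "pure_ghost GV GF s \<Longrightarrow> s \<in> substmts (body P) \<Longrightarrow> \<exists>out. exec P s \<sigma> out"
proof (induction s arbitrary: \<sigma>)
  case (SSeq a b)
  have sa: "a \<in> substmts (body P)" "b \<in> substmts (body P)"
    using SSeq.prems(2) substmts_trans[of "SSeq a b" "body P"] substmts_self[of a] substmts_self[of b] by auto
  obtain oa where oa: "exec P a \<sigma> oa" using SSeq sa by auto
  show ?case
  proof (cases oa)
    case (Norm \<sigma>')
    obtain ob where "exec P b \<sigma>' ob" using SSeq sa by auto
    then show ?thesis using oa Norm by (auto intro: exec.Seq)
  qed (use oa in \<open>auto intro: exec.SeqAbrupt\<close>)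
next
  case (SIf e a b)
  have sa: "a \<in> substmts (body P)" "b \<in> substmts (body P)"
    using SIf.prems(2) substmts_trans[of "SIf e a b" "body P"] substmts_self[of a] substmts_self[of b] by auto
  show ?case
  proof (cases "\<exists>bb. eval (store \<sigma>) e = Some (BoolV bb)")
    case True
    then obtain bb where bb: "eval (store \<sigma>) e = Some (BoolV bb)" by auto
    show ?thesis
    proof (cases bb)
      case True
      obtain o1 where "exec P a \<sigma> o1" using SIf sa by auto
      then show ?thesis using bb True by (auto intro: exec.IfT)
    next
      case False
      obtain o1 where "exec P b \<sigma> o1" using SIf sa by auto
      then show ?thesis using bb False by (auto intro: exec.IfF)
    qed
  qed (auto intro: exec.IfErr)
next
  case (SWhile e s)
  then show ?case using glt unfolding ghost_loops_terminate_def by auto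
next
  case (SAssign x e)
  then show ?case by (cases "eval (store \<sigma>) e") (auto intro: exec.Assign exec.AssignErr)
next
  case (SLookup x y f)
  then show ?case by (metis exec.Lookup exec.LookupErr)
next
  case (SMutate y f z)
  then show ?case by (metis exec.Mutate exec.MutateErr)
qed (auto intro: exec.Skip)

lemma eval_agree: "(\<forall>x\<in>evars e. s x = s' x) \<Longrightarrow> eval s e = eval s' e"
proof (induction e)
  case (EOp f es)
  then have "map (eval s) es = map (eval s') es" by auto
  then show ?case by (simp only: eval.simps)
qed auto

lemma eval_restrict: "evars e \<inter> GV = {} \<Longrightarrow> eval (s |` (- GV)) e = eval s e"
  by (rule eval_agree) (auto simp: restrict_map_def)

lemma proj_list_simps[simp]:
  "proj_list GV [] zs = []" "proj_list GV ps [] = []"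
  "proj_list GV (p # ps) (z # zs) = (if p \<notin> GV then z # proj_list GV ps zs else proj_list GV ps zs)"
  by (auto simp: proj_list_def)

lemma proj_list_map: "proj_list GV ps (map f a) = map f (proj_list GV ps a)"
proof (induction ps arbitrary: a)
  case (Cons p ps) then show ?case by (cases a) auto
qed simp

lemma proj_list_agree:
  "(\<forall>(p, x) \<in> set (zip ps a). p \<notin> GV \<longrightarrow> f x = g x) \<Longrightarrow>
   proj_list GV ps (map f a) = proj_list GV ps (map g a)"
proof (induction ps arbitrary: a)
  case (Cons p ps) then show ?case by (cases a) auto
qed simp

lemma proj_list_same: "proj_list GV xs xs = filter (\<lambda>p. p \<notin> GV) xs"
  by (induction xs) auto

lemma proj_list_cong:
  "length xs = length ys \<Longrightarrow> (\<forall>i<length xs. xs ! i \<in> GV \<longleftrightarrow> ys ! i \<in> GV) \<Longrightarrow>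
   proj_list GV xs zs = proj_list GV ys zs"
proof (induction xs arbitrary: ys zs)
  case (Cons x xs)
  then obtain y ys' where ys: "ys = y # ys'" by (cases ys) auto
  have "\<forall>i<length xs. xs ! i \<in> GV \<longleftrightarrow> ys' ! i \<in> GV" using Cons.prems ys by force
  moreover have "x \<in> GV \<longleftrightarrow> y \<in> GV" using Cons.prems(2) ys by force
  ultimately show ?case using Cons ys by (cases zs) auto
qed simp

lemma upds_restrict:
  "length ps = length vs \<Longrightarrow>
   (m(ps [\<mapsto>] vs)) |` (- GV) = (m |` (- GV))(filter (\<lambda>p. p \<notin> GV) ps [\<mapsto>] proj_list GV ps vs)"
proof (induction ps arbitrary: vs m)
  case (Cons p ps)
  then obtain v vs' where vs: "vs = v # vs'" by (cases vs) auto
  have e: "m(p # ps [\<mapsto>] v # vs') = (m(p \<mapsto> v))(ps [\<mapsto>] vs')" by simp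
  show ?case
  proof (cases "p \<in> GV")
    case True
    have "m(p \<mapsto> v) |` (- GV) = m |` (- GV)" using True by (auto simp: restrict_map_def fun_eq_iff)
    then show ?thesis using Cons.IH[of vs' "m(p \<mapsto> v)"] Cons.prems vs True e by (simp del: map_upds_Cons fun_upd_apply)
  next
    case False
    have "m(p \<mapsto> v) |` (- GV) = (m |` (- GV))(p \<mapsto> v)" using False by (auto simp: restrict_map_def fun_eq_iff)
    then show ?thesis using Cons.IH[of vs' "m(p \<mapsto> v)"] Cons.prems vs False e by (simp del: fun_upd_apply)
  qed
qed simp

lemma restrict_upd_in: "x \<in> D \<Longrightarrow> (m(x := y)) |` D = (m |` D)(x := y)"
  by (auto simp: restrict_map_def fun_eq_iff)
lemma restrict_upd_out: "x \<notin> D \<Longrightarrow> (m(x := y)) |` D = m |` D"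
  by (auto simp: restrict_map_def fun_eq_iff)

lemma ps_simps[simp]:
  "proj_stmt GV GF ps rs SSkip = SSkip"
  "proj_stmt GV GF ps rs (SAssign x e) = (if x \<in> GV then SSkip else SAssign x e)"
  "proj_stmt GV GF ps rs (SLookup x y f) = (if x \<in> GV then SSkip else SLookup x y f)"
  "proj_stmt GV GF ps rs (SMutate y f z) = (if f \<in> GF \<and> z \<in> GV then SSkip else SMutate y f z)"
  "proj_stmt GV GF ps rs (SAlloc x) = SAlloc x"
  "proj_stmt GV GF ps rs (SCall rr aa) = SCall (proj_list GV rs rr) (proj_list GV ps aa)"
  "proj_stmt GV GF ps rs (SAssume e) = SAssume e"
  "proj_stmt GV GF ps rs SReturn = SReturn"
  "proj_stmt GV GF ps rs (SSeq a b) = (if pure_ghost GV GF a \<and> pure_ghost GV GF b then SSkip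
      else SSeq (proj_stmt GV GF ps rs a) (proj_stmt GV GF ps rs b))"
  "proj_stmt GV GF ps rs (SIf e a b) = (if pure_ghost GV GF a \<and> pure_ghost GV GF b then SSkip
      else SIf e (proj_stmt GV GF ps rs a) (proj_stmt GV GF ps rs b))"
  "proj_stmt GV GF ps rs (SWhile e b) = (if pure_ghost GV GF b then SSkip
      else SWhile e (proj_stmt GV GF ps rs b))"
  by (subst proj_stmt.simps; simp)+

lemma proj_Skip: "SSkip = proj_stmt GV GF ps rs s \<Longrightarrow> pure_ghost GV GF s"
  by (cases s) (auto split: if_splits)

lemma ghost_case:
  assumes glt: "ghost_loops_terminate GV GF M" and g: "pure_ghost GV GF s"
    and sub: "s \<in> substmts (body M)"
  shows "exec M s C Bot \<or> (\<exists>C'. exec M s C (Norm C') \<and> restrict GV GF C' = restrict GV GF C)"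
proof -
  obtain out where ex: "exec M s C out" using ghost_term[OF glt g sub] by blast
  from ghost_pres[OF ex g] ex show ?thesis by auto
qed

definition simok where
  "simok GV GF M s C out \<longleftrightarrow> exec M s C Bot \<or> (\<exists>C'. (out = Norm (restrict GV GF C') \<and> exec M s C (Norm C'))
      \<or> (out = Ret (restrict GV GF C') \<and> exec M s C (Ret C')))"

lemma sub_Seq: "SSeq a b \<in> substmts t \<Longrightarrow> a \<in> substmts t \<and> b \<in> substmts t"
  using substmts_trans[of "SSeq a b" t] substmts_self[of a] substmts_self[of b] by auto
lemma sub_If: "SIf e a b \<in> substmts t \<Longrightarrow> a \<in> substmts t \<and> b \<in> substmts t"
  using substmts_trans[of "SIf e a b" t] substmts_self[of a] substmts_self[of b] by auto
lemma sub_While: "SWhile e b \<in> substmts t \<Longrightarrow> b \<in> substmts t"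
  using substmts_trans[of "SWhile e b" t] substmts_self[of b] by auto

lemma R_store: "restrict GV GF C = \<sigma> \<Longrightarrow> x \<notin> GV \<Longrightarrow> store \<sigma> x = store C x"
  by (auto simp: restrict_def)
lemma R_heap: "restrict GV GF C = \<sigma> \<Longrightarrow> f \<notin> GF \<Longrightarrow> heap \<sigma> (l, f) = heap C (l, f)"
  by (auto simp: restrict_def)
lemma R_allocd: "restrict GV GF C = \<sigma> \<Longrightarrow> allocd \<sigma> = allocd C"
  by (auto simp: restrict_def)
lemma R_eval: "restrict GV GF C = \<sigma> \<Longrightarrow> evars e \<inter> GV = {} \<Longrightarrow> eval (store \<sigma>) e = eval (store C) e"
  using eval_restrict[of e GV "store C"] by (auto simp: restrict_def)

lemma sim:
  assumes wf: "wf_proc GV GF M" and glt: "ghost_loops_terminate GV GF M"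
    and ex: "exec (proj GV GF M) t c out"
  shows "t = proj_stmt GV GF (params M) (results M) s \<Longrightarrow> aug GV GF (params M) (results M) s \<Longrightarrow>
    s \<in> substmts (body M) \<Longrightarrow> restrict GV GF C = c \<Longrightarrow> out \<noteq> Bot \<Longrightarrow> simok GV GF M s C out"
  using ex
proof (induction arbitrary: s C rule: exec.induct)
  case (Skip \<sigma>)
  then have "pure_ghost GV GF s" using proj_Skip by metis
  from ghost_case[OF glt this Skip(3), of C] Skip show ?case unfolding simok_def by auto
next
  case (Assign \<sigma> e v x)
  then have s: "s = SAssign x e" "x \<notin> GV" "evars e \<inter> GV = {}"
    by (cases s; auto split: if_splits)+
  have "eval (store C) e = Some v" using Assign s R_eval by metis
  then have "exec M s C (Norm (C\<lparr>store := (store C)(x \<mapsto> v)\<rparr>))" using s by (auto intro: exec.Assign)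
  moreover have "restrict GV GF (C\<lparr>store := (store C)(x \<mapsto> v)\<rparr>) = \<sigma>\<lparr>store := (store \<sigma>)(x \<mapsto> v)\<rparr>"
    using Assign.prems(4) s(2) by (auto simp: restrict_def restrict_upd_in simp del: restrict_fun_upd)
  ultimately show ?case unfolding simok_def by metis
next
  case (Lookup \<sigma> y l f v x)
  then have s: "s = SLookup x y f" "x \<notin> GV" "y \<notin> GV" "f \<notin> GF"
    by (cases s; auto split: if_splits)+
  have "store C y = Some (RefV l)" "l \<in> allocd C" "heap C (l, f) = Some v"
    using Lookup s R_store R_heap R_allocd by metis+
  then have "exec M s C (Norm (C\<lparr>store := (store C)(x \<mapsto> v)\<rparr>))" using s by (auto intro: exec.Lookup)
  moreover have "restrict GV GF (C\<lparr>store := (store C)(x \<mapsto> v)\<rparr>) = \<sigma>\<lparr>store := (store \<sigma>)(x \<mapsto> v)\<rparr>"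
    using Lookup.prems(4) s(2) by (auto simp: restrict_def restrict_upd_in simp del: restrict_fun_upd)
  ultimately show ?case unfolding simok_def by metis
next
  case (Mutate \<sigma> y l z v f)
  then have s: "s = SMutate y f z" "z \<notin> GV" "y \<notin> GV" "f \<notin> GF"
    by (cases s; auto split: if_splits)+
  have "store C y = Some (RefV l)" "l \<in> allocd C" "store C z = Some v"
    using Mutate s R_store R_heap R_allocd by metis+
  then have "exec M s C (Norm (C\<lparr>heap := (heap C)((l, f) \<mapsto> v)\<rparr>))" using s by (auto intro: exec.Mutate)
  moreover have "restrict GV GF (C\<lparr>heap := (heap C)((l, f) \<mapsto> v)\<rparr>) = \<sigma>\<lparr>heap := (heap \<sigma>)((l, f) \<mapsto> v)\<rparr>"
    using Mutate.prems(4) s(4) by (auto simp: restrict_def restrict_upd_in simp del: restrict_fun_upd)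
  ultimately show ?case unfolding simok_def by metis
next
  case (Alloc l \<sigma> x)
  then have s: "s = SAlloc x" "x \<notin> GV"
    by (cases s; auto split: if_splits)+
  have "l \<notin> allocd C" using Alloc R_allocd by metis
  then have "exec M s C (Norm (C\<lparr>store := (store C)(x \<mapsto> RefV l), allocd := insert l (allocd C)\<rparr>))"
    using s by (auto intro: exec.Alloc)
  moreover have "restrict GV GF (C\<lparr>store := (store C)(x \<mapsto> RefV l), allocd := insert l (allocd C)\<rparr>)
      = \<sigma>\<lparr>store := (store \<sigma>)(x \<mapsto> RefV l), allocd := insert l (allocd \<sigma>)\<rparr>"
    using Alloc.prems(4) s(2) by (auto simp: restrict_def restrict_upd_in simp del: restrict_fun_upd)
  ultimately show ?case unfolding simok_def by metis
next
  case (AssumeT \<sigma> e)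
  then have s: "s = SAssume e" "evars e \<inter> GV = {}"
    by (cases s; auto split: if_splits)+
  have "exec M s C (Norm C)" using AssumeT s R_eval by (metis exec.AssumeT)
  then show ?case using AssumeT unfolding simok_def by auto
next
  case (Return \<sigma>)
  then have s: "s = SReturn" by (cases s; auto split: if_splits)+
  have "exec M s C (Ret C)" using s by (auto intro: exec.Return)
  then show ?case using Return unfolding simok_def by auto
next
  case (Seq a \<sigma> \<sigma>' b out)
  then obtain a0 b0 where s: "s = SSeq a0 b0" "a = proj_stmt GV GF (params M) (results M) a0"
     "b = proj_stmt GV GF (params M) (results M) b0" "aug GV GF (params M) (results M) a0"
     "aug GV GF (params M) (results M) b0"
    by (cases s; auto split: if_splits)
  have sub: "a0 \<in> substmts (body M)" "b0 \<in> substmts (body M)" using Seq.prems(3) s sub_Seq by metis+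
  from Seq.IH(1)[OF s(2) s(4) sub(1) Seq.prems(4)]
  have "simok GV GF M a0 C (Norm \<sigma>')" by simp
  then consider "exec M a0 C Bot" | C' where "exec M a0 C (Norm C')" "restrict GV GF C' = \<sigma>'"
    unfolding simok_def by auto
  then show ?case
  proof cases
    case 1 then show ?thesis unfolding simok_def s by (auto intro: exec.SeqAbrupt)
  next
    case 2
    from Seq.IH(2)[OF s(3) s(5) sub(2) 2(2) Seq.prems(5)]
    show ?thesis using 2(1) unfolding simok_def s by (auto intro: exec.Seq)
  qed
next
  case (SeqAbrupt a \<sigma> out b)
  then obtain a0 b0 where s: "s = SSeq a0 b0" "a = proj_stmt GV GF (params M) (results M) a0"
     "aug GV GF (params M) (results M) a0"
    by (cases s; auto split: if_splits)
  have sub: "a0 \<in> substmts (body M)" using SeqAbrupt.prems(3) s sub_Seq by metis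
  from SeqAbrupt.IH[OF s(2) s(3) sub SeqAbrupt.prems(4,5)] SeqAbrupt.hyps(2)
  show ?case unfolding simok_def s by (auto intro: exec.SeqAbrupt)
next
  case (IfT \<sigma> e a out b)
  then obtain a0 b0 where s: "s = SIf e a0 b0" "a = proj_stmt GV GF (params M) (results M) a0"
     "aug GV GF (params M) (results M) a0" "evars e \<inter> GV = {}"
    by (cases s; auto split: if_splits)
  have sub: "a0 \<in> substmts (body M)" using IfT.prems(3) s sub_If by metis
  have ev: "eval (store C) e = Some (BoolV True)" using IfT s R_eval by metis
  from IfT.IH[OF s(2) s(3) sub IfT.prems(4,5)] ev
  show ?case unfolding simok_def s by (auto intro: exec.IfT)
next
  case (IfF \<sigma> e b out a)
  then obtain a0 b0 where s: "s = SIf e a0 b0" "b = proj_stmt GV GF (params M) (results M) b0"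
     "aug GV GF (params M) (results M) b0" "evars e \<inter> GV = {}"
    by (cases s; auto split: if_splits)
  have sub: "b0 \<in> substmts (body M)" using IfF.prems(3) s sub_If by metis
  have ev: "eval (store C) e = Some (BoolV False)" using IfF s R_eval by metis
  from IfF.IH[OF s(2) s(3) sub IfF.prems(4,5)] ev
  show ?case unfolding simok_def s by (auto intro: exec.IfF)
next
  case (WhileT \<sigma> e b \<sigma>' out)
  then obtain b0 where s: "s = SWhile e b0" "b = proj_stmt GV GF (params M) (results M) b0"
     "aug GV GF (params M) (results M) b0" "evars e \<inter> GV = {}"
    by (cases s; auto split: if_splits)
  have sub: "b0 \<in> substmts (body M)" using WhileT.prems(3) s sub_While by metis
  have ev: "eval (store C) e = Some (BoolV True)" using WhileT s R_eval by metis
  from WhileT.IH(1)[OF s(2) s(3) sub WhileT.prems(4)]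
  have "simok GV GF M b0 C (Norm \<sigma>')" by simp
  then consider "exec M b0 C Bot" | C' where "exec M b0 C (Norm C')" "restrict GV GF C' = \<sigma>'"
    unfolding simok_def by auto
  then show ?case
  proof cases
    case 1 then show ?thesis using ev unfolding simok_def s by (auto intro: exec.WhileAbrupt)
  next
    case 2
    from WhileT.IH(2)[OF WhileT.prems(1-3) 2(2) WhileT.prems(5)]
    show ?thesis using 2(1) ev unfolding simok_def s by (auto intro: exec.WhileT)
  qed
next
  case (WhileAbrupt \<sigma> e b out)
  then obtain b0 where s: "s = SWhile e b0" "b = proj_stmt GV GF (params M) (results M) b0"
     "aug GV GF (params M) (results M) b0" "evars e \<inter> GV = {}"
    by (cases s; auto split: if_splits)
  have sub: "b0 \<in> substmts (body M)" using WhileAbrupt.prems(3) s sub_While by metis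
  have ev: "eval (store C) e = Some (BoolV True)" using WhileAbrupt s R_eval by metis
  from WhileAbrupt.IH[OF s(2) s(3) sub WhileAbrupt.prems(4,5)] WhileAbrupt.hyps(3) ev
  show ?case unfolding simok_def s by (auto intro: exec.WhileAbrupt)
next
  case (WhileF \<sigma> e b)
  then obtain b0 where s: "s = SWhile e b0" "evars e \<inter> GV = {}"
    by (cases s; auto split: if_splits)
  have ev: "eval (store C) e = Some (BoolV False)" using WhileF s R_eval by metis
  then show ?case using WhileF unfolding simok_def s by (auto intro: exec.WhileF)
next
  case (Call \<sigma> as vs out \<sigma>1 ws rs)
  let ?ps = "params M" and ?rss = "results M"
  from Call.prems obtain r0 a0 where s: "s = SCall r0 a0" "rs = proj_list GV ?rss r0"
      "as = proj_list GV ?ps a0"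
    by (cases s; auto split: if_splits)
  from Call.prems(2) s have lr: "length r0 = length ?rss" and la: "length a0 = length ?ps"
    and ai: "\<forall>i<length a0. ?ps ! i \<notin> GV \<longrightarrow> a0 ! i \<notin> GV"
    and ri: "\<forall>i<length r0. ?rss ! i \<in> GV \<longleftrightarrow> r0 ! i \<in> GV" by auto
  have P': "params (proj GV GF M) = filter (\<lambda>p. p \<notin> GV) ?ps"
    "results (proj GV GF M) = filter (\<lambda>p. p \<notin> GV) ?rss"
    "body (proj GV GF M) = proj_stmt GV GF ?ps ?rss (body M)" by (auto simp: proj_def)
  show ?case
  proof (cases "\<exists>vs0. map (store C) a0 = map Some vs0")
    case False
    then have "exec M s C Bot" unfolding s by (auto intro!: exec.CallArgErr)
    then show ?thesis unfolding simok_def by auto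
  next
    case True
    then obtain vs0 where vs0: "map (store C) a0 = map Some vs0" by auto
    have lvs0: "length vs0 = length ?ps" using vs0 la by (metis length_map)
    have agr: "\<forall>(p, x) \<in> set (zip ?ps a0). p \<notin> GV \<longrightarrow> store \<sigma> x = store C x"
    proof (intro ballI impI, clarify)
      fix p x assume px: "(p, x) \<in> set (zip ?ps a0)" "p \<notin> GV"
      then obtain i where "i < length a0" "p = ?ps ! i" "x = a0 ! i" using la by (auto simp: set_zip)
      then have "x \<notin> GV" using ai px by auto
      then show "store \<sigma> x = store C x" using R_store Call.prems(4) by metis
    qed
    have "map Some vs = map (store \<sigma>) as" using Call.hyps(1) by simp
    also have "\<dots> = proj_list GV ?ps (map (store \<sigma>) a0)" using s by (simp add: proj_list_map)
    also have "\<dots> = proj_list GV ?ps (map (store C) a0)" by (rule proj_list_agree[OF agr])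
    also have "\<dots> = map Some (proj_list GV ?ps vs0)" using vs0 by (simp add: proj_list_map)
    finally have vs: "vs = proj_list GV ?ps vs0" by (simp add: inj_map_eq_map)
    define Cb where "Cb = C\<lparr>store := Map.empty(?ps [\<mapsto>] vs0)\<rparr>"
    have RCb: "restrict GV GF Cb = \<sigma>\<lparr>store := Map.empty(params (proj GV GF M) [\<mapsto>] vs)\<rparr>"
      using Call.prems(4) upds_restrict[of ?ps vs0 Map.empty GV] lvs0 vs P'
      by (auto simp: restrict_def Cb_def)
    have wfb: "aug GV GF ?ps ?rss (body M)" using wf by (simp add: wf_proc_def)
    have "simok GV GF M (body M) Cb out"
      using Call.IH[OF P'(3) wfb substmts_self RCb] Call.hyps(4) by auto
    then consider "exec M (body M) Cb Bot"
      | \<Sigma>1 out1 where "exec M (body M) Cb out1" "out1 = Norm \<Sigma>1 \<or> out1 = Ret \<Sigma>1" "restrict GV GF \<Sigma>1 = \<sigma>1"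
      unfolding simok_def using Call.hyps(4) by (elim disjE exE conjE) blast+
    then show ?thesis
    proof cases
      case 1
      then have "exec M s C Bot" unfolding s Cb_def using vs0 la by (auto intro: exec.CallBodyErr)
      then show ?thesis unfolding simok_def by auto
    next
      case 2
      show ?thesis
      proof (cases "\<exists>ws0. map (store \<Sigma>1) ?rss = map Some ws0")
        case False
        then have "exec M s C Bot" unfolding s using 2 vs0 la Cb_def
          by (auto intro!: exec.CallResErr[of C a0 vs0 M out1 \<Sigma>1])
        then show ?thesis unfolding simok_def by auto
      next
        case True
        then obtain ws0 where ws0: "map (store \<Sigma>1) ?rss = map Some ws0" by auto
        have lws0: "length ws0 = length ?rss" using ws0 by (metis length_map)
        have agr2: "\<forall>(p, x) \<in> set (zip ?rss ?rss). p \<notin> GV \<longrightarrow> store \<sigma>1 x = store \<Sigma>1 x"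
          using R_store 2(3) by (fastforce simp: set_zip)
        have "map Some ws = map (store \<sigma>1) (results (proj GV GF M))" using Call.hyps(5) by simp
        also have "\<dots> = proj_list GV ?rss (map (store \<sigma>1) ?rss)" using P' by (simp add: proj_list_map proj_list_same)
        also have "\<dots> = proj_list GV ?rss (map (store \<Sigma>1) ?rss)" by (rule proj_list_agree[OF agr2])
        also have "\<dots> = map Some (proj_list GV ?rss ws0)" using ws0 by (simp add: proj_list_map)
        finally have ws: "ws = proj_list GV ?rss ws0" by (simp add: inj_map_eq_map)
        define C2 where "C2 = C\<lparr>store := (store C)(r0 [\<mapsto>] ws0), allocd := allocd \<Sigma>1, heap := heap \<Sigma>1\<rparr>"
        have ex2: "exec M s C (Norm C2)" unfolding s C2_def
          using exec.Call[of C a0 vs0 M out1 \<Sigma>1 ws0 r0] vs0 la 2 Cb_def ws0 lr by auto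
        have c1: "filter (\<lambda>p. p \<notin> GV) r0 = proj_list GV ?rss r0"
          using proj_list_same[of GV r0] proj_list_cong[of r0 ?rss GV r0] lr ri by auto
        have c2: "proj_list GV r0 ws0 = proj_list GV ?rss ws0"
          using proj_list_cong[of r0 ?rss GV ws0] lr ri by auto
        have "restrict GV GF C2 = \<sigma>\<lparr>store := (store \<sigma>)(rs [\<mapsto>] ws), allocd := allocd \<sigma>1, heap := heap \<sigma>1\<rparr>"
          using Call.prems(4) upds_restrict[of r0 ws0 "store C" GV] lws0 lr c1 c2 s ws 2(3)
          by (auto simp: restrict_def C2_def)
        then show ?thesis using ex2 unfolding simok_def by auto
      qed
    qed
  qed
qed (simp_all add: simok_def)

theorem lemmaB4:
  assumes "wf_proc GV GF M"
    and "ghost_loops_terminate GV GF M"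
    and "user_conf GV GF c1"
    and "run (proj GV GF M) c1 (Some c2)"
    and "extends GV GF C1 c1"
  shows "run M C1 None \<or> (\<exists>C2. run M C1 (Some C2) \<and> extends GV GF C2 c2)"
proof -
  have b: "body (proj GV GF M) = proj_stmt GV GF (params M) (results M) (body M)" by (simp add: proj_def)
  have wfb: "aug GV GF (params M) (results M) (body M)" using assms(1) by (simp add: wf_proc_def)
  have R: "restrict GV GF C1 = c1" using assms(5) by (simp add: extends_def)
  from assms(4) have "exec (proj GV GF M) (body (proj GV GF M)) c1 (Norm c2) \<or>
      exec (proj GV GF M) (body (proj GV GF M)) c1 (Ret c2)" by (simp add: run_def)
  then show ?thesis
  proof
    assume ex: "exec (proj GV GF M) (body (proj GV GF M)) c1 (Norm c2)"
    from sim[OF assms(1,2) ex b wfb substmts_self R] show ?thesis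
      unfolding simok_def run_def extends_def by auto
  next
    assume ex: "exec (proj GV GF M) (body (proj GV GF M)) c1 (Ret c2)"
    from sim[OF assms(1,2) ex b wfb substmts_self R] show ?thesis
      unfolding simok_def run_def extends_def by auto
  qed
qed

end
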